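(* Let $d:a\mapsto a'$ be a Hardy type series derivation on $\mathbb{K}$. Let $a\in\mathbb{K}^*$ with $a\not\asymp\hat\theta$, and set $\alpha=\mathrm{LM}(a)$. Let $\psi_\alpha\in\Phi$ be the unique fundamental monomial with $\mathrm{LF}(\alpha/\theta^{(\psi_\alpha)})=\psi_\alpha$, and put $$m=\frac{\alpha}{\mathrm{LE}\!\left(\alpha/\theta^{(\psi_\alpha)}\right)\,\mathrm{LT}\!\left(\psi_\alpha'/\psi_\alpha\right)}.$$ Then $m$ is an asymptotic integral of $\alpha$, namely $\mathrm{LT}(m')=\alpha$, and $\mathrm{LC}(a)\,m$ is an asymptotic integral of $a$, namely $\mathrm{LT}\big((\mathrm{LC}(a)m)'\big)=\mathrm{LT}(a)$. (These are denoted $\mathrm{a.i.}(\alpha)=m$ and $\mathrm{a.i.}(a)=\mathrm{LC}(a)\,\mathrm{a.i.}(\alpha)$.)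
   Context: Let $(\Phi,\preccurlyeq)$ be a totally ordered set; $\mathbf{H}(\Phi)$ is the group of formal products $\gamma=\prod_{\phi}\phi^{\gamma_\phi}$, $\gamma_\phi\in\mathbb{R}$, with anti-well-ordered support $\operatorname{supp}\gamma$, pointwise multiplication and anti-lexicographic order ($\gamma\succ1$ iff the exponent of $\max\operatorname{supp}\gamma$ is positive); $\Phi\subseteq\mathbf H(\Phi)$ via $\phi=\phi^1$. Fix a subgroup $\Gamma\supseteq\Phi$. For $1\ne\gamma$: $\mathrm{LF}(\gamma)=\max\operatorname{supp}\gamma$, $\mathrm{LE}(\gamma)=\gamma_{\mathrm{LF}(\gamma)}$. $\mathbb{K}=\mathbb{R}((\Gamma))$: formal series with anti-well-ordered support in $\Gamma$; for $a\ne0$, $\mathrm{LM}(a)$ is the largest monomial of the support, $\mathrm{LC}(a)$ its coefficient, $\mathrm{LT}(a)=\mathrm{LC}(a)\mathrm{LM}(a)$; $a\preccurlyeq b$ iff $\mathrm{LM}(a)\preccurlyeq\mathrm{LM}(b)$, $a\asymp b$ iff equal leading monomials; $|a|=\max(\mathrm{LM}(a),\mathrm{LM}(a)^{-1})$; $a,b\succ1$ comparable iff $\mathrm{LF}(\mathrm{LM}(a))=\mathrm{LF}(\mathrm{LM}(b))$. Summable families: union of supports anti-well-ordered, each monomial in finitely many supports. Series derivation: map $a\mapsto a'$ with $1'=0$, $\alpha'=\alpha\sum_{\phi\in\operatorname{supp}\alpha}\alpha_\phi\phi'/\phi$, $a'=\sum a_\alpha\alpha'$ (summable families). Hardy type: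 (HD1) constants $=\mathbb{R}$; (HD2) for $a,b\in\mathbb{K}^*$, $a,b\not\asymp1$: $a\preccurlyeq b\iff a'\preccurlyeq b'$; (HD3) for $|a|\succ|b|\succ1$: $a'/a\succcurlyeq b'/b$, with $\asymp$ iff $a,b$ comparable. $\theta^{(\phi)}=\mathrm{LM}(\phi'/\phi)$; $\hat\theta$ is the greatest lower bound of $\{\theta^{(\phi)}:\phi\in\Phi\}$ in $\Gamma$ if it exists (the condition $a\not\asymp\hat\theta$ is vacuous otherwise). For $\alpha\in\Gamma$, $\alpha\neq\hat\theta$, a unique $\psi_\alpha\in\Phi$ with $\mathrm{LF}(\alpha/\theta^{(\psi_\alpha)})=\psi_\alpha$ exists. $b$ is an asymptotic integral of $a$ if $b'\sim a$, i.e. $\mathrm{LT}(b')=\mathrm{LT}(a)$. *)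

theory Defs
  imports Main "HOL.Real"
begin

(* Fundamental monomials: elements of a linearly ordered type 'p (this is Phi).
   Elements of the Hahn group H(Phi) are represented additively by their exponent
   functions  'p => real  ; the product of monomials is pointwise addition of exponents. *)

type_synonym 'p mon = "'p \<Rightarrow> real"
type_synonym 'p ser = "'p mon \<Rightarrow> real"

definition anti_wo :: "'p::linorder set \<Rightarrow> bool" where
  "anti_wo S \<longleftrightarrow> (\<forall>T\<subseteq>S. T \<noteq> {} \<longrightarrow> (\<exists>m\<in>T. \<forall>t\<in>T. t \<le> m))"

definition msupp :: "'p mon \<Rightarrow> 'p set" where
  "msupp \<gamma> = {p. \<gamma> p \<noteq> 0}"

definition Hahn :: "'p::linorder mon set" where
  "Hahn = {\<gamma>. anti_wo (msupp \<gamma>)}"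

definition mone :: "'p mon" where "mone = (\<lambda>_. 0)"
definition mmul :: "'p mon \<Rightarrow> 'p mon \<Rightarrow> 'p mon" where "mmul \<gamma> \<delta> = (\<lambda>p. \<gamma> p + \<delta> p)"
definition mdiv :: "'p mon \<Rightarrow> 'p mon \<Rightarrow> 'p mon" where "mdiv \<gamma> \<delta> = (\<lambda>p. \<gamma> p - \<delta> p)"
definition minv :: "'p mon \<Rightarrow> 'p mon" where "minv \<gamma> = (\<lambda>p. - \<gamma> p)"

definition fund :: "'p \<Rightarrow> 'p mon" where "fund \<phi> = (\<lambda>q. if q = \<phi> then 1 else 0)"

text \<open>leading fundamental monomial and leading exponent (for gamma ~= 1)\<close>
definition LF :: "'p::linorder mon \<Rightarrow> 'p" where
  "LF \<gamma> = (THE p. \<gamma> p \<noteq> 0 \<and> (\<forall>q. \<gamma> q \<noteq> 0 \<longrightarrow> q \<le> p))"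
definition LE :: "'p::linorder mon \<Rightarrow> real" where "LE \<gamma> = \<gamma> (LF \<gamma>)"

definition mgt1 :: "'p::linorder mon \<Rightarrow> bool" where
  "mgt1 \<gamma> \<longleftrightarrow> \<gamma> \<noteq> mone \<and> LE \<gamma> > 0"
definition mle :: "'p::linorder mon \<Rightarrow> 'p mon \<Rightarrow> bool" where
  "mle \<gamma> \<delta> \<longleftrightarrow> \<gamma> = \<delta> \<or> mgt1 (mdiv \<delta> \<gamma>)"
definition mless :: "'p::linorder mon \<Rightarrow> 'p mon \<Rightarrow> bool" where
  "mless \<gamma> \<delta> \<longleftrightarrow> \<gamma> \<noteq> \<delta> \<and> mle \<gamma> \<delta>"

definition mabs :: "'p::linorder mon \<Rightarrow> 'p mon" where
  "mabs \<gamma> = (if mle mone \<gamma> then \<gamma> else minv \<gamma>)"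

definition anti_wo_m :: "'p::linorder mon set \<Rightarrow> bool" where
  "anti_wo_m S \<longleftrightarrow> (\<forall>T\<subseteq>S. T \<noteq> {} \<longrightarrow> (\<exists>m\<in>T. \<forall>t\<in>T. mle t m))"

definition value_group :: "'p::linorder mon set \<Rightarrow> bool" where
  "value_group \<Gamma> \<longleftrightarrow> \<Gamma> \<subseteq> Hahn \<and> mone \<in> \<Gamma> \<and>
     (\<forall>\<gamma>\<in>\<Gamma>. \<forall>\<delta>\<in>\<Gamma>. mdiv \<gamma> \<delta> \<in> \<Gamma>) \<and> (\<forall>\<phi>. fund \<phi> \<in> \<Gamma>)"

definition ssupp :: "'p ser \<Rightarrow> 'p mon set" where
  "ssupp a = {\<mu>. a \<mu> \<noteq> 0}"

definition KK :: "'p::linorder mon set \<Rightarrow> 'p ser set" where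
  "KK \<Gamma> = {a. ssupp a \<subseteq> \<Gamma> \<and> anti_wo_m (ssupp a)}"

definition szero :: "'p ser" where "szero = (\<lambda>_. 0)"
definition smono :: "'p mon \<Rightarrow> 'p ser" where "smono \<mu> = (\<lambda>\<nu>. if \<nu> = \<mu> then 1 else 0)"
definition sone :: "'p ser" where "sone = smono mone"
definition sscale :: "real \<Rightarrow> 'p ser \<Rightarrow> 'p ser" where "sscale c a = (\<lambda>\<nu>. c * a \<nu>)"
text \<open>product of a monomial mu with a series a\<close>
definition sshift :: "'p mon \<Rightarrow> 'p ser \<Rightarrow> 'p ser" where
  "sshift \<mu> a = (\<lambda>\<nu>. a (mdiv \<nu> \<mu>))"

definition LM :: "'p::linorder ser \<Rightarrow> 'p mon" where
  "LM a = (THE \<mu>. a \<mu> \<noteq> 0 \<and> (\<forall>\<nu>. a \<nu> \<noteq> 0 \<longrightarrow> mle \<nu> \<mu>))"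
definition LC :: "'p::linorder ser \<Rightarrow> real" where "LC a = a (LM a)"
definition LT :: "'p::linorder ser \<Rightarrow> 'p ser" where
  "LT a = (\<lambda>\<nu>. if \<nu> = LM a then LC a else 0)"

definition sle :: "'p::linorder ser \<Rightarrow> 'p ser \<Rightarrow> bool" where
  "sle a b \<longleftrightarrow> a = szero \<or> (b \<noteq> szero \<and> mle (LM a) (LM b))"

definition summable_fam :: "'i set \<Rightarrow> ('i \<Rightarrow> 'p::linorder ser) \<Rightarrow> bool" where
  "summable_fam I F \<longleftrightarrow> anti_wo_m (\<Union>i\<in>I. ssupp (F i)) \<and> (\<forall>\<nu>. finite {i\<in>I. F i \<nu> \<noteq> 0})"
definition fam_sum :: "'i set \<Rightarrow> ('i \<Rightarrow> 'p ser) \<Rightarrow> 'p ser" where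
  "fam_sum I F = (\<lambda>\<nu>. \<Sum>i\<in>{i\<in>I. F i \<nu> \<noteq> 0}. F i \<nu>)"

definition series_derivation :: "'p::linorder mon set \<Rightarrow> ('p ser \<Rightarrow> 'p ser) \<Rightarrow> bool" where
  "series_derivation \<Gamma> d \<longleftrightarrow>
     (\<forall>a\<in>KK \<Gamma>. d a \<in> KK \<Gamma>) \<and>
     d sone = szero \<and>
     (\<forall>\<alpha>\<in>\<Gamma>.
        summable_fam (msupp \<alpha>) (\<lambda>\<phi>. sscale (\<alpha> \<phi>) (sshift (minv (fund \<phi>)) (d (smono (fund \<phi>))))) \<and>
        d (smono \<alpha>) = sshift \<alpha>
          (fam_sum (msupp \<alpha>) (\<lambda>\<phi>. sscale (\<alpha> \<phi>) (sshift (minv (fund \<phi>)) (d (smono (fund \<phi>))))))) \<and>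
     (\<forall>a\<in>KK \<Gamma>.
        summable_fam (ssupp a) (\<lambda>\<alpha>. sscale (a \<alpha>) (d (smono \<alpha>))) \<and>
        d a = fam_sum (ssupp a) (\<lambda>\<alpha>. sscale (a \<alpha>) (d (smono \<alpha>))))"

text \<open>Hardy type. LM(a'/a) is written LM(a') / LM(a) (K is a valued field).\<close>
definition hardy_type :: "'p::linorder mon set \<Rightarrow> ('p ser \<Rightarrow> 'p ser) \<Rightarrow> bool" where
  "hardy_type \<Gamma> d \<longleftrightarrow>
     (\<forall>a\<in>KK \<Gamma>. d a = szero \<longleftrightarrow> (\<exists>c. a = sscale c sone)) \<and>
     (\<forall>a\<in>KK \<Gamma>. \<forall>b\<in>KK \<Gamma>. a \<noteq> szero \<and> b \<noteq> szero \<and> LM a \<noteq> mone \<and> LM b \<noteq> mone \<longrightarrow>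
        (sle a b \<longleftrightarrow> sle (d a) (d b))) \<and>
     (\<forall>a\<in>KK \<Gamma>. \<forall>b\<in>KK \<Gamma>. a \<noteq> szero \<and> b \<noteq> szero \<and>
        mless (mabs (LM b)) (mabs (LM a)) \<and> mless mone (mabs (LM b)) \<longrightarrow>
        mle (mdiv (LM (d b)) (LM b)) (mdiv (LM (d a)) (LM a)) \<and>
        (mdiv (LM (d a)) (LM a) = mdiv (LM (d b)) (LM b) \<longleftrightarrow> LF (LM a) = LF (LM b)))"

definition hardy_series_derivation :: "'p::linorder mon set \<Rightarrow> ('p ser \<Rightarrow> 'p ser) \<Rightarrow> bool" where
  "hardy_series_derivation \<Gamma> d \<longleftrightarrow> series_derivation \<Gamma> d \<and> hardy_type \<Gamma> d"

definition theta :: "('p::linorder ser \<Rightarrow> 'p ser) \<Rightarrow> 'p \<Rightarrow> 'p mon" where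
  "theta d \<phi> = mdiv (LM (d (smono (fund \<phi>)))) (fund \<phi>)"

definition is_theta_hat :: "'p::linorder mon set \<Rightarrow> ('p ser \<Rightarrow> 'p ser) \<Rightarrow> 'p mon \<Rightarrow> bool" where
  "is_theta_hat \<Gamma> d t \<longleftrightarrow> t \<in> \<Gamma> \<and> (\<forall>\<phi>. mle t (theta d \<phi>)) \<and>
     (\<forall>s\<in>\<Gamma>. (\<forall>\<phi>. mle s (theta d \<phi>)) \<longrightarrow> mle s t)"

definition psi :: "('p::linorder ser \<Rightarrow> 'p ser) \<Rightarrow> 'p mon \<Rightarrow> 'p" where
  "psi d \<alpha> = (THE \<psi>. mdiv \<alpha> (theta d \<psi>) \<noteq> mone \<and> LF (mdiv \<alpha> (theta d \<psi>)) = \<psi>)"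

text \<open>m = alpha / (LE(alpha/theta^(psi)) * LT(psi'/psi)), a single term\<close>
definition ai_mon :: "('p::linorder ser \<Rightarrow> 'p ser) \<Rightarrow> 'p mon \<Rightarrow> 'p ser" where
  "ai_mon d \<alpha> = (let \<psi> = psi d \<alpha>; l = d (smono (fund \<psi>)) in
     sscale (1 / (LE (mdiv \<alpha> (theta d \<psi>)) * LC l))
       (smono (mdiv \<alpha> (mdiv (LM l) (fund \<psi>)))))"

end

theory Submission
  imports Defs
begin


lemma LF_eqI: "\<gamma> p \<noteq> 0 \<Longrightarrow> (\<And>q. \<gamma> q \<noteq> 0 \<Longrightarrow> q \<le> p) \<Longrightarrow> LF \<gamma> = p"
  unfolding LF_def by (rule the_equality) (auto intro: antisym)

lemma mone_iff: "\<gamma> = mone \<longleftrightarrow> (\<forall>p. \<gamma> p = 0)"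
  unfolding mone_def by auto

lemma LF_ex:
  assumes "\<gamma> \<in> Hahn" "\<gamma> \<noteq> mone"
  shows "\<gamma> (LF \<gamma>) \<noteq> 0" "\<And>q. \<gamma> q \<noteq> 0 \<Longrightarrow> q \<le> LF \<gamma>"
proof -
  have "msupp \<gamma> \<noteq> {}" using assms(2) by (auto simp: mone_iff msupp_def)
  then obtain m where m: "m \<in> msupp \<gamma>" "\<forall>t\<in>msupp \<gamma>. t \<le> m"
    using assms(1) unfolding Hahn_def anti_wo_def by blast
  hence "LF \<gamma> = m" by (intro LF_eqI) (auto simp: msupp_def)
  thus "\<gamma> (LF \<gamma>) \<noteq> 0" "\<And>q. \<gamma> q \<noteq> 0 \<Longrightarrow> q \<le> LF \<gamma>" using m by (auto simp: msupp_def)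
qed

lemma LF_minv: "LF (minv \<gamma>) = LF \<gamma>"
  unfolding LF_def minv_def by simp

lemma LE_minv: "LE (minv \<gamma>) = - LE \<gamma>"
  unfolding LE_def LF_minv by (simp add: minv_def)

lemma mdiv_swap: "mdiv y x = minv (mdiv x y)"
  unfolding mdiv_def minv_def by auto

lemma minv_mone: "minv \<gamma> = mone \<longleftrightarrow> \<gamma> = mone"
  unfolding minv_def mone_def by (auto simp: fun_eq_iff)

lemma mdiv_mone: "mdiv x y = mone \<longleftrightarrow> x = y"
  unfolding mdiv_def mone_def by (auto simp: fun_eq_iff)

lemma mgt1_minv: "mgt1 \<gamma> \<Longrightarrow> \<not> mgt1 (minv \<gamma>)"
  unfolding mgt1_def LE_minv by auto

lemma mle_antisym: "mle x y \<Longrightarrow> mle y x \<Longrightarrow> x = y"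
  unfolding mle_def using mgt1_minv mdiv_swap by metis

lemma mle_refl: "mle x x" unfolding mle_def by simp

lemma vg_Hahn: "value_group \<Gamma> \<Longrightarrow> x \<in> \<Gamma> \<Longrightarrow> x \<in> Hahn"
  unfolding value_group_def by auto
lemma vg_mdiv: "value_group \<Gamma> \<Longrightarrow> x \<in> \<Gamma> \<Longrightarrow> y \<in> \<Gamma> \<Longrightarrow> mdiv x y \<in> \<Gamma>"
  unfolding value_group_def by auto
lemma vg_mone: "value_group \<Gamma> \<Longrightarrow> mone \<in> \<Gamma>"
  unfolding value_group_def by auto
lemma vg_fund: "value_group \<Gamma> \<Longrightarrow> fund p \<in> \<Gamma>"
  unfolding value_group_def by auto
lemma vg_minv: "value_group \<Gamma> \<Longrightarrow> x \<in> \<Gamma> \<Longrightarrow> minv x \<in> \<Gamma>"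
proof -
  have "minv x = mdiv mone x" by (auto simp: minv_def mdiv_def mone_def)
  thus "value_group \<Gamma> \<Longrightarrow> x \<in> \<Gamma> \<Longrightarrow> minv x \<in> \<Gamma>" using vg_mdiv vg_mone by metis
qed
lemma vg_mmul: "value_group \<Gamma> \<Longrightarrow> x \<in> \<Gamma> \<Longrightarrow> y \<in> \<Gamma> \<Longrightarrow> mmul x y \<in> \<Gamma>"
proof -
  have "mmul x y = mdiv x (minv y)" by (auto simp: minv_def mdiv_def mmul_def)
  thus "value_group \<Gamma> \<Longrightarrow> x \<in> \<Gamma> \<Longrightarrow> y \<in> \<Gamma> \<Longrightarrow> mmul x y \<in> \<Gamma>" using vg_mdiv vg_minv by metis
qed

lemma mgt1_total:
  assumes "\<gamma> \<in> Hahn" "\<gamma> \<noteq> mone" shows "mgt1 \<gamma> \<or> mgt1 (minv \<gamma>)"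
proof -
  have "LE \<gamma> \<noteq> 0" using LF_ex[OF assms] by (simp add: LE_def)
  thus ?thesis using assms unfolding mgt1_def LE_minv by (auto simp: minv_mone)
qed

lemma mgt1_mmul:
  assumes "a \<in> Hahn" "b \<in> Hahn" "mgt1 a" "mgt1 b" shows "mgt1 (mmul a b)"
proof -
  have an: "a \<noteq> mone" "LE a > 0" and bn: "b \<noteq> mone" "LE b > 0" using assms(3,4) by (auto simp: mgt1_def)
  note A = LF_ex[OF assms(1) an(1)] and B = LF_ex[OF assms(2) bn(1)]
  show ?thesis
  proof (cases "LF a" "LF b" rule: linorder_cases)
    case less
    have "b (LF b) \<noteq> 0" "a (LF b) = 0" using B(1) A(2) less by force+
    hence "LF (mmul a b) = LF b"
    proof (intro LF_eqI)
      fix q assume "mmul a b q \<noteq> 0"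
      hence "a q \<noteq> 0 \<or> b q \<noteq> 0" by (auto simp: mmul_def)
      thus "q \<le> LF b" using A(2) B(2) less by (meson less_imp_le order.trans)
    qed (simp add: mmul_def)
    moreover have "mmul a b (LF b) = LE b" using \<open>a (LF b) = 0\<close> by (simp add: mmul_def LE_def)
    ultimately show ?thesis using bn unfolding mgt1_def LE_def mone_iff by (metis less_irrefl)
  next
    case greater
    have "a (LF a) \<noteq> 0" "b (LF a) = 0" using A(1) B(2) greater by force+
    hence "LF (mmul a b) = LF a"
    proof (intro LF_eqI)
      fix q assume "mmul a b q \<noteq> 0"
      hence "a q \<noteq> 0 \<or> b q \<noteq> 0" by (auto simp: mmul_def)
      thus "q \<le> LF a" using A(2) B(2) greater by (meson less_imp_le order.trans)
    qed (simp add: mmul_def)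
    moreover have "mmul a b (LF a) = LE a" using \<open>b (LF a) = 0\<close> by (simp add: mmul_def LE_def)
    ultimately show ?thesis using an unfolding mgt1_def LE_def mone_iff by (metis less_irrefl)
  next
    case equal
    have "mmul a b (LF a) = LE a + LE b" using equal by (simp add: mmul_def LE_def)
    hence nz: "mmul a b (LF a) \<noteq> 0" using an bn by simp
    hence "LF (mmul a b) = LF a"
    proof (intro LF_eqI)
      fix q assume "mmul a b q \<noteq> 0"
      hence "a q \<noteq> 0 \<or> b q \<noteq> 0" by (auto simp: mmul_def)
      thus "q \<le> LF a" using A(2) B(2) equal by metis
    qed
    thus ?thesis using nz an bn \<open>mmul a b (LF a) = LE a + LE b\<close> unfolding mgt1_def LE_def mone_iff by (metis add_pos_pos)
  qed
qed

lemma mle_trans: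
  assumes "value_group \<Gamma>" "x \<in> \<Gamma>" "y \<in> \<Gamma>" "z \<in> \<Gamma>" "mle x y" "mle y z" shows "mle x z"
proof -
  have e: "mdiv z x = mmul (mdiv z y) (mdiv y x)" by (auto simp: mdiv_def mmul_def)
  have h: "mdiv z y \<in> Hahn" "mdiv y x \<in> Hahn" using assms vg_mdiv vg_Hahn by blast+
  show ?thesis
  proof (cases "x = y")
    case True thus ?thesis using assms(6) by simp
  next
    case False
    show ?thesis
    proof (cases "y = z")
      case True thus ?thesis using assms(5) by simp
    next
      case F2: False
      have "mgt1 (mdiv z y)" "mgt1 (mdiv y x)" using assms(5,6) False F2 unfolding mle_def by auto
      hence "mgt1 (mdiv z x)" unfolding e using mgt1_mmul h by blast
      thus ?thesis unfolding mle_def by simp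
    qed
  qed
qed


lemma mle_total:
  assumes "value_group \<Gamma>" "x \<in> \<Gamma>" "y \<in> \<Gamma>" shows "mle x y \<or> mle y x"
proof (cases "x = y")
  case False
  have "mdiv y x \<in> Hahn" using assms vg_mdiv vg_Hahn by blast
  moreover have "mdiv y x \<noteq> mone" using False mdiv_mone by metis
  ultimately show ?thesis using mgt1_total mdiv_swap unfolding mle_def by metis
qed (simp add: mle_refl)

lemma mle_not_gt: "mle x y \<Longrightarrow> \<not> mgt1 (mdiv x y)"
  unfolding mle_def using mgt1_minv mdiv_swap mdiv_mone mgt1_def by metis

lemma mle_transl: "mle (mmul x c) (mmul y c) \<longleftrightarrow> mle x y"
proof -
  have "mdiv (mmul y c) (mmul x c) = mdiv y x" by (auto simp: mdiv_def mmul_def)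
  moreover have "mmul x c = mmul y c \<longleftrightarrow> x = y" by (auto simp: mmul_def fun_eq_iff)
  ultimately show ?thesis unfolding mle_def by simp
qed


lemma LM_eqI: assumes "a m \<noteq> 0" "\<And>\<nu>. a \<nu> \<noteq> 0 \<Longrightarrow> mle \<nu> m" shows "LM a = m"
  unfolding LM_def
proof (rule the_equality)
  show "a m \<noteq> 0 \<and> (\<forall>\<nu>. a \<nu> \<noteq> 0 \<longrightarrow> mle \<nu> m)" using assms by blast
next
  fix \<mu> assume h: "a \<mu> \<noteq> 0 \<and> (\<forall>\<nu>. a \<nu> \<noteq> 0 \<longrightarrow> mle \<nu> \<mu>)"
  hence "mle m \<mu>" "mle \<mu> m" using assms by blast+
  thus "\<mu> = m" using mle_antisym by metis
qed

lemma szero_iff: "a = szero \<longleftrightarrow> (\<forall>\<nu>. a \<nu> = 0)"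
  unfolding szero_def by auto

lemma LM_ex:
  assumes "a \<in> KK \<Gamma>" "a \<noteq> szero"
  shows "a (LM a) \<noteq> 0" "\<And>\<nu>. a \<nu> \<noteq> 0 \<Longrightarrow> mle \<nu> (LM a)" "LM a \<in> \<Gamma>"
proof -
  have "ssupp a \<noteq> {}" using assms(2) by (auto simp: szero_iff ssupp_def)
  then obtain m where m: "m \<in> ssupp a" "\<forall>t\<in>ssupp a. mle t m"
    using assms(1) unfolding KK_def anti_wo_m_def by blast
  hence "LM a = m" by (intro LM_eqI) (auto simp: ssupp_def)
  thus "a (LM a) \<noteq> 0" "\<And>\<nu>. a \<nu> \<noteq> 0 \<Longrightarrow> mle \<nu> (LM a)" "LM a \<in> \<Gamma>"
    using m assms(1) by (auto simp: ssupp_def KK_def)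
qed

lemma smono_KK: assumes "\<mu> \<in> \<Gamma>" shows "smono \<mu> \<in> KK \<Gamma>"
proof -
  have s: "ssupp (smono \<mu>) = {\<mu>}" by (auto simp: ssupp_def smono_def)
  have "anti_wo_m {\<mu>}" unfolding anti_wo_m_def
  proof (intro allI impI)
    fix T assume "T \<subseteq> {\<mu>}" "T \<noteq> {}"
    hence "T = {\<mu>}" by blast
    thus "\<exists>m\<in>T. \<forall>t\<in>T. mle t m" by (simp add: mle_refl)
  qed
  thus ?thesis using assms s unfolding KK_def by simp
qed

lemma smono_nz: "smono \<mu> \<noteq> szero" unfolding szero_iff smono_def by (metis one_neq_zero)
lemma LM_smono: "LM (smono \<mu>) = \<mu>"
proof (rule LM_eqI)
  fix \<nu> assume "smono \<mu> \<nu> \<noteq> 0" thus "mle \<nu> \<mu>" by (cases "\<nu> = \<mu>") (simp_all add: smono_def mle_refl)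
qed (simp add: smono_def)

lemma sle_smono: "sle (smono \<mu>) (smono \<nu>) \<longleftrightarrow> mle \<mu> \<nu>"
  unfolding sle_def LM_smono by (simp add: smono_nz)

lemma fund_ne: "fund p \<noteq> mone" by (auto simp: fund_def mone_iff)
lemma LF_fund: "LF (fund p) = p" by (rule LF_eqI) (auto simp: fund_def split: if_splits)
lemma mgt1_fund: "mgt1 (fund p)" unfolding mgt1_def LE_def LF_fund using fund_ne by (simp add: fund_def)



lemma mdiv_mone_right: "mdiv x mone = x" by (auto simp: mdiv_def mone_def)

lemma mabs_fund: "mabs (fund p) = fund p"
  unfolding mabs_def mle_def mdiv_mone_right by (simp add: mgt1_fund)

lemma fund_less: assumes "p < q" shows "mless (fund p) (fund q)"
proof -
  have ne: "fund p \<noteq> fund q" using assms by (auto simp: fund_def fun_eq_iff)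
  have "LF (mdiv (fund q) (fund p)) = q"
  proof (rule LF_eqI)
    show "mdiv (fund q) (fund p) q \<noteq> 0" using assms by (simp add: mdiv_def fund_def)
    fix r assume "mdiv (fund q) (fund p) r \<noteq> 0"
    hence "r = p \<or> r = q" by (auto simp: mdiv_def fund_def split: if_splits)
    thus "r \<le> q" using assms by auto
  qed
  moreover have "mdiv (fund q) (fund p) \<noteq> mone" using ne mdiv_mone by metis
  moreover have "mdiv (fund q) (fund p) q = 1" using assms by (simp add: mdiv_def fund_def)
  ultimately have "mgt1 (mdiv (fund q) (fund p))" 
    unfolding mgt1_def LE_def by simp
  thus ?thesis using ne unfolding mless_def mle_def by simp
qed

lemma mless_mone_fund: "mless mone (fund p)"
  unfolding mless_def mle_def mdiv_mone_right using mgt1_fund fund_ne by metis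

locale HS =
  fixes \<Gamma> :: "'p::linorder mon set" and d :: "'p ser \<Rightarrow> 'p ser"
  assumes vg: "value_group \<Gamma>" and hd: "hardy_series_derivation \<Gamma> d"
begin

lemma sd: "series_derivation \<Gamma> d" using hd unfolding hardy_series_derivation_def by simp
lemma ht: "hardy_type \<Gamma> d" using hd unfolding hardy_series_derivation_def by simp

lemmas SD = sd[unfolded series_derivation_def]
lemmas HT = ht[unfolded hardy_type_def]

lemma d_KK: "x \<in> KK \<Gamma> \<Longrightarrow> d x \<in> KK \<Gamma>" using SD[THEN conjunct1] by (rule bspec)

lemma d_mono: "\<mu> \<in> \<Gamma> \<Longrightarrow> d (smono \<mu>) = sshift \<mu>
          (fam_sum (msupp \<mu>) (\<lambda>\<phi>. sscale (\<mu> \<phi>) (sshift (minv (fund \<phi>)) (d (smono (fund \<phi>))))))"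
  using SD[THEN conjunct2, THEN conjunct2, THEN conjunct1, rule_format, THEN conjunct2] .

lemma d_lin: "x \<in> KK \<Gamma> \<Longrightarrow> d x = fam_sum (ssupp x) (\<lambda>\<alpha>. sscale (x \<alpha>) (d (smono \<alpha>)))"
  using SD[THEN conjunct2, THEN conjunct2, THEN conjunct2, rule_format, THEN conjunct2] .

lemma HD1: "x \<in> KK \<Gamma> \<Longrightarrow> d x = szero \<longleftrightarrow> (\<exists>c. x = sscale c sone)"
  using HT[THEN conjunct1, rule_format] .

lemma HD2: "x \<in> KK \<Gamma> \<Longrightarrow> y \<in> KK \<Gamma> \<Longrightarrow> x \<noteq> szero \<Longrightarrow> y \<noteq> szero \<Longrightarrow> LM x \<noteq> mone \<Longrightarrow> LM y \<noteq> mone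
   \<Longrightarrow> sle x y \<longleftrightarrow> sle (d x) (d y)"
  using HT[THEN conjunct2, THEN conjunct1, rule_format] by simp

lemma HD3: "x \<in> KK \<Gamma> \<Longrightarrow> y \<in> KK \<Gamma> \<Longrightarrow> x \<noteq> szero \<Longrightarrow> y \<noteq> szero \<Longrightarrow>
        mless (mabs (LM y)) (mabs (LM x)) \<Longrightarrow> mless mone (mabs (LM y)) \<Longrightarrow>
        mle (mdiv (LM (d y)) (LM y)) (mdiv (LM (d x)) (LM x)) \<and>
        (mdiv (LM (d x)) (LM x) = mdiv (LM (d y)) (LM y) \<longleftrightarrow> LF (LM x) = LF (LM y))"
  using HT[THEN conjunct2, THEN conjunct2, rule_format] by simp

lemma fund_KK: "smono (fund p) \<in> KK \<Gamma>" using smono_KK vg_fund[OF vg] by blast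

lemma l_KK: "d (smono (fund p)) \<in> KK \<Gamma>" using d_KK fund_KK by blast

lemma l_nz: "d (smono (fund p)) \<noteq> szero"
proof
  assume "d (smono (fund p)) = szero"
  then obtain c where c: "smono (fund p) = sscale c sone" using HD1 fund_KK by blast
  have "smono (fund p) mone = 0" using fund_ne by (metis smono_def)
  moreover have "sscale c sone mone = c" by (simp add: sscale_def sone_def smono_def)
  ultimately have "c = 0" using c by metis
  moreover have "smono (fund p) (fund p) = 1" by (simp add: smono_def)
  moreover have "sscale 0 sone (fund p) = 0" by (simp add: sscale_def)
  ultimately show False using c by simp
qed

lemma LM_l_in: "LM (d (smono (fund p))) \<in> \<Gamma>" using LM_ex(3)[OF l_KK l_nz] .

lemma theta_in: "theta d p \<in> \<Gamma>"
  unfolding theta_def using vg_mdiv[OF vg LM_l_in vg_fund[OF vg]] .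

lemma LM_l: "LM (d (smono (fund p))) = mmul (theta d p) (fund p)"
  unfolding theta_def by (auto simp: mmul_def mdiv_def)

lemma LC_l: "LC (d (smono (fund p))) \<noteq> 0"
  unfolding LC_def using LM_ex(1)[OF l_KK l_nz] .

lemma F1: assumes "p < q" shows "mle (theta d p) (theta d q)" "theta d p \<noteq> theta d q"
proof -
  have "mless (mabs (LM (smono (fund p)))) (mabs (LM (smono (fund q))))"
    "mless mone (mabs (LM (smono (fund p))))"
    unfolding LM_smono mabs_fund using fund_less[OF assms] mless_mone_fund by auto
  from HD3[OF fund_KK fund_KK smono_nz smono_nz this]
  show "mle (theta d p) (theta d q)" "theta d p \<noteq> theta d q"
    unfolding LM_smono LF_fund theta_def using assms by auto
qed

lemma F1': "p \<le> q \<Longrightarrow> mle (theta d p) (theta d q)"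
  using F1(1) mle_refl by (cases "p = q") auto


lemma fam_sum_nz: "fam_sum I F x \<noteq> 0 \<Longrightarrow> \<exists>i\<in>I. F i x \<noteq> 0"
proof (rule ccontr)
  assume "fam_sum I F x \<noteq> 0" "\<not> (\<exists>i\<in>I. F i x \<noteq> 0)"
  hence "{i\<in>I. F i x \<noteq> 0} = {}" by auto
  thus False using \<open>fam_sum I F x \<noteq> 0\<close> unfolding fam_sum_def by simp
qed

lemma fam_sum_single: "{i\<in>I. F i x \<noteq> 0} = {j} \<Longrightarrow> fam_sum I F x = F j x"
  unfolding fam_sum_def by simp

lemma KK_supp: "x \<in> KK \<Gamma> \<Longrightarrow> x \<nu> \<noteq> 0 \<Longrightarrow> \<nu> \<in> \<Gamma>"
  unfolding KK_def ssupp_def by auto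

lemma LM_l_le: "d (smono (fund p)) y \<noteq> 0 \<Longrightarrow> mle y (LM (d (smono (fund p))))"
  by (rule LM_ex(2)[OF l_KK l_nz])

lemma key: "d (smono (fund p)) (mmul x (fund p)) \<noteq> 0 \<Longrightarrow> mle x (theta d p)"
  using LM_l_le[of p "mmul x (fund p)"] unfolding LM_l mle_transl by simp

lemma M:
  assumes mu: "\<mu> \<in> \<Gamma>" "\<mu> \<noteq> mone"
  shows "LM (d (smono \<mu>)) = mmul \<mu> (theta d (LF \<mu>))"
    "d (smono \<mu>) (mmul \<mu> (theta d (LF \<mu>))) = LE \<mu> * LC (d (smono (fund (LF \<mu>))))"
    "d (smono \<mu>) \<noteq> szero"
proof -
  define \<chi> where "\<chi> = LF \<mu>"
  define F where "F = (\<lambda>\<phi>. sscale (\<mu> \<phi>) (sshift (minv (fund \<phi>)) (d (smono (fund \<phi>)))))"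
  define \<tau> where "\<tau> = mmul \<mu> (theta d \<chi>)"
  have Fv: "F \<phi> x = \<mu> \<phi> * d (smono (fund \<phi>)) (mmul x (fund \<phi>))" for \<phi> x
  proof -
    have "mdiv x (minv (fund \<phi>)) = mmul x (fund \<phi>)" by (auto simp: mdiv_def minv_def mmul_def)
    thus ?thesis unfolding F_def sscale_def sshift_def by simp
  qed
  have D: "d (smono \<mu>) \<nu> = fam_sum (msupp \<mu>) F (mdiv \<nu> \<mu>)" for \<nu>
    using d_mono[OF mu(1)] unfolding F_def sshift_def by simp
  have key: "mle x (theta d \<phi>)" if "d (smono (fund \<phi>)) (mmul x (fund \<phi>)) \<noteq> 0" for x \<phi>
    using key that .
  have muH: "\<mu> \<in> Hahn" using vg_Hahn[OF vg mu(1)] .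
  note LFm = LF_ex[OF muH mu(2), folded \<chi>_def]
  have set1: "{\<phi>\<in>msupp \<mu>. F \<phi> (theta d \<chi>) \<noteq> 0} = {\<chi>}"
  proof -
    have "F \<chi> (theta d \<chi>) \<noteq> 0"
      unfolding Fv using LFm(1) LM_ex(1)[OF l_KK l_nz, of \<chi>] unfolding LM_l by simp
    moreover have "\<chi> \<in> msupp \<mu>" using LFm(1) by (simp add: msupp_def)
    moreover have "\<phi> = \<chi>" if "\<phi> \<in> msupp \<mu>" "F \<phi> (theta d \<chi>) \<noteq> 0" for \<phi>
    proof (rule ccontr)
      assume ne: "\<phi> \<noteq> \<chi>"
      have "\<phi> \<le> \<chi>" using LFm(2) that(1) by (simp add: msupp_def)
      hence lt: "\<phi> < \<chi>" using ne by simp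
      have "mle (theta d \<chi>) (theta d \<phi>)" using key that(2) unfolding Fv by simp
      thus False using F1[OF lt] mle_antisym by metis
    qed
    ultimately show ?thesis by blast
  qed
  have v: "d (smono \<mu>) \<tau> = LE \<mu> * LC (d (smono (fund \<chi>)))"
  proof -
    have "mdiv \<tau> \<mu> = theta d \<chi>" unfolding \<tau>_def by (auto simp: mdiv_def mmul_def)
    hence "d (smono \<mu>) \<tau> = F \<chi> (theta d \<chi>)" unfolding D using fam_sum_single[where F=F, OF set1] by simp
    thus ?thesis unfolding Fv LE_def LC_def LM_l \<chi>_def by simp
  qed
  have vnz: "d (smono \<mu>) \<tau> \<noteq> 0" unfolding v using LFm(1) LC_l by (simp add: LE_def \<chi>_def)
  have le: "mle \<nu> \<tau>" if nz: "d (smono \<mu>) \<nu> \<noteq> 0" for \<nu>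
  proof -
    have nuG: "\<nu> \<in> \<Gamma>" using KK_supp[OF d_KK[OF smono_KK[OF mu(1)]] nz] .
    obtain \<phi> where ph: "\<phi> \<in> msupp \<mu>" "F \<phi> (mdiv \<nu> \<mu>) \<noteq> 0"
      using fam_sum_nz[OF nz[unfolded D]] by blast
    have "mle (mdiv \<nu> \<mu>) (theta d \<phi>)" using key ph(2) unfolding Fv by simp
    moreover have "mle (theta d \<phi>) (theta d \<chi>)" using F1' LFm(2) ph(1) by (simp add: msupp_def)
    ultimately have "mle (mdiv \<nu> \<mu>) (theta d \<chi>)"
      using mle_trans[OF vg vg_mdiv[OF vg nuG mu(1)] theta_in theta_in] by blast
    hence "mle (mmul (mdiv \<nu> \<mu>) \<mu>) (mmul (theta d \<chi>) \<mu>)" unfolding mle_transl .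
    moreover have "mmul (mdiv \<nu> \<mu>) \<mu> = \<nu>" "mmul (theta d \<chi>) \<mu> = \<tau>"
      unfolding \<tau>_def by (auto simp: mdiv_def mmul_def)
    ultimately show ?thesis by simp
  qed
  have "LM (d (smono \<mu>)) = \<tau>" by (rule LM_eqI[where a="d (smono \<mu>)", OF vnz le])
  thus "LM (d (smono \<mu>)) = mmul \<mu> (theta d (LF \<mu>))" unfolding \<tau>_def \<chi>_def .
  show "d (smono \<mu>) (mmul \<mu> (theta d (LF \<mu>))) = LE \<mu> * LC (d (smono (fund (LF \<mu>))))"
    using v unfolding \<tau>_def \<chi>_def .
  show "d (smono \<mu>) \<noteq> szero" using vnz by (auto simp: szero_def)
qed


lemma HD2_mono:
  assumes "\<mu> \<in> \<Gamma>" "\<nu> \<in> \<Gamma>" "\<mu> \<noteq> mone" "\<nu> \<noteq> mone" "mle \<mu> \<nu>"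
  shows "mle (mmul \<mu> (theta d (LF \<mu>))) (mmul \<nu> (theta d (LF \<nu>)))"
proof -
  have "sle (smono \<mu>) (smono \<nu>)" using assms(5) sle_smono by blast
  hence "sle (d (smono \<mu>)) (d (smono \<nu>))"
    using HD2[OF smono_KK[OF assms(1)] smono_KK[OF assms(2)] smono_nz smono_nz] assms(3,4)
    unfolding LM_smono by blast
  hence "mle (LM (d (smono \<mu>))) (LM (d (smono \<nu>)))"
    unfolding sle_def using M(3)[OF assms(1,3)] by blast
  thus ?thesis unfolding M(1)[OF assms(1,3)] M(1)[OF assms(2,4)] .
qed

lemma mgt1_I: assumes "w z > 0" "\<And>s. w s \<noteq> 0 \<Longrightarrow> s \<le> z" shows "mgt1 w"
proof -
  have "LF w = z" using assms by (intro LF_eqI) auto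
  moreover have "w \<noteq> mone" using assms(1) by (auto simp: mone_def)
  ultimately show ?thesis using assms(1) unfolding mgt1_def LE_def by simp
qed

lemma theta_gt: assumes "p < q" shows "mgt1 (mdiv (theta d q) (theta d p))"
  using F1[OF assms] unfolding mle_def by auto

lemma F2: assumes pq: "p < q" and r: "mdiv (theta d q) (theta d p) r \<noteq> 0" shows "r < q"
proof (rule ccontr)
  assume "\<not> r < q" hence qr: "q \<le> r" by simp
  define \<gamma> where "\<gamma> = mdiv (theta d q) (theta d p)"
  have gG: "\<gamma> \<in> \<Gamma>" unfolding \<gamma>_def using vg_mdiv[OF vg theta_in theta_in] .
  have gm: "mgt1 \<gamma>" unfolding \<gamma>_def using theta_gt[OF pq] .
  hence gne: "\<gamma> \<noteq> mone" and gpos: "\<gamma> (LF \<gamma>) > 0" unfolding mgt1_def LE_def by auto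
  note LG = LF_ex[OF vg_Hahn[OF vg gG] gne]
  have "r \<le> LF \<gamma>" using LG(2) r unfolding \<gamma>_def by blast
  hence qz: "q \<le> LF \<gamma>" using qr by simp
  have fq: "LF (minv (fund q)) = q" "LF (minv (fund p)) = p" unfolding LF_minv LF_fund by auto
  have mfq: "minv (fund q) \<noteq> mone" "minv (fund p) \<noteq> mone" using fund_ne minv_mone by metis+
  have mG: "minv (fund q) \<in> \<Gamma>" "minv (fund p) \<in> \<Gamma>" using vg_minv[OF vg vg_fund[OF vg]] by auto
  show False
  proof (cases "q < LF \<gamma>")
    case True
    have "mgt1 (mdiv (fund q) (fund p))" using fund_less[OF pq] unfolding mless_def mle_def by auto
    moreover have "mdiv (minv (fund p)) (minv (fund q)) = mdiv (fund q) (fund p)"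
      by (auto simp: mdiv_def minv_def)
    ultimately have "mle (minv (fund q)) (minv (fund p))" unfolding mle_def by simp
    from HD2_mono[OF mG mfq this]
    have A: "mle (mmul (minv (fund q)) (theta d q)) (mmul (minv (fund p)) (theta d p))" unfolding fq .
    have "mgt1 (mdiv (mmul (minv (fund q)) (theta d q)) (mmul (minv (fund p)) (theta d p)))"
    proof (rule mgt1_I[where z="LF \<gamma>"])
      have "fund q (LF \<gamma>) = 0" "fund p (LF \<gamma>) = 0" using True pq by (auto simp: fund_def)
      thus "mdiv (mmul (minv (fund q)) (theta d q)) (mmul (minv (fund p)) (theta d p)) (LF \<gamma>) > 0"
        using gpos unfolding \<gamma>_def by (simp add: mdiv_def mmul_def minv_def)
    next
      fix s assume h: "mdiv (mmul (minv (fund q)) (theta d q)) (mmul (minv (fund p)) (theta d p)) s \<noteq> 0"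
      have "s = q \<or> s = p \<or> \<gamma> s \<noteq> 0"
      proof (rule ccontr)
        assume "\<not> (s = q \<or> s = p \<or> \<gamma> s \<noteq> 0)"
        thus False using h unfolding \<gamma>_def by (simp add: mdiv_def mmul_def minv_def fund_def)
      qed
      thus "s \<le> LF \<gamma>" using LG(2) True pq by auto
    qed
    thus False using mle_not_gt[OF A] by simp
  next
    case False
    hence z: "LF \<gamma> = q" using qz by simp
    have LFm: "LF (minv \<gamma>) = q" unfolding LF_minv using z .
    have mg: "minv \<gamma> \<in> \<Gamma>" "minv \<gamma> \<noteq> mone" using vg_minv[OF vg gG] gne minv_mone by auto
    have "mgt1 (mdiv (minv (fund p)) (minv \<gamma>))"
    proof (rule mgt1_I[where z=q])
      show "mdiv (minv (fund p)) (minv \<gamma>) q > 0" using gpos z pq by (auto simp: mdiv_def minv_def fund_def)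
    next
      fix s assume h: "mdiv (minv (fund p)) (minv \<gamma>) s \<noteq> 0"
      have "s = p \<or> \<gamma> s \<noteq> 0"
      proof (rule ccontr)
        assume "\<not> (s = p \<or> \<gamma> s \<noteq> 0)"
        thus False using h by (simp add: mdiv_def minv_def fund_def)
      qed
      thus "s \<le> q" using LG(2) z pq by auto
    qed
    hence "mle (minv \<gamma>) (minv (fund p))" unfolding mle_def by simp
    from HD2_mono[OF mg(1) mG(2) mg(2) mfq(2) this]
    have A: "mle (mmul (minv \<gamma>) (theta d q)) (mmul (minv (fund p)) (theta d p))" unfolding fq LFm .
    have "mdiv (mmul (minv \<gamma>) (theta d q)) (mmul (minv (fund p)) (theta d p)) = fund p"
      unfolding \<gamma>_def by (auto simp: mdiv_def mmul_def minv_def)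
    thus False using mle_not_gt[OF A] by (simp add: mgt1_fund)
  qed
qed


lemma g_rel: "mdiv \<alpha> (theta d p) = mmul (mdiv \<alpha> (theta d q)) (mdiv (theta d q) (theta d p))"
  by (auto simp: mdiv_def mmul_def)

lemma g_in: "\<alpha> \<in> \<Gamma> \<Longrightarrow> mdiv \<alpha> (theta d p) \<in> Hahn"
  using vg_Hahn[OF vg vg_mdiv[OF vg _ theta_in]] by blast

lemma psi_uniq:
  assumes aG: "\<alpha> \<in> \<Gamma>" and p: "mdiv \<alpha> (theta d p) \<noteq> mone" "LF (mdiv \<alpha> (theta d p)) = p"
    and q: "mdiv \<alpha> (theta d q) \<noteq> mone" "LF (mdiv \<alpha> (theta d q)) = q"
  shows "p = q"
proof (rule ccontr)
  assume ne: "p \<noteq> q"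
  have *: False if pq: "p < q" and p: "mdiv \<alpha> (theta d p) \<noteq> mone" "LF (mdiv \<alpha> (theta d p)) = p"
    and q: "mdiv \<alpha> (theta d q) \<noteq> mone" "LF (mdiv \<alpha> (theta d q)) = q" for p q
  proof -
    have "mdiv \<alpha> (theta d q) q \<noteq> 0" using LF_ex(1)[OF g_in[OF aG] q(1)] q(2) by simp
    moreover have "mdiv (theta d q) (theta d p) q = 0" using F2[OF pq] by blast
    ultimately have "mdiv \<alpha> (theta d p) q \<noteq> 0" by (subst g_rel[of _ _ q]) (simp add: mmul_def)
    hence "q \<le> p" using LF_ex(2)[OF g_in[OF aG] p(1)] p(2) by metis
    thus False using pq by simp
  qed
  show False using ne * p q by (metis linorder_neq_iff)
qed

lemma psi_exists:
  assumes aG: "\<alpha> \<in> \<Gamma>" and nt: "\<not> is_theta_hat \<Gamma> d \<alpha>"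
  shows "\<exists>p. mdiv \<alpha> (theta d p) \<noteq> mone \<and> LF (mdiv \<alpha> (theta d p)) = p"
proof (rule ccontr)
  assume H: "\<not> ?thesis"
  define g where "g = (\<lambda>p. mdiv \<alpha> (theta d p))"
  have gH: "g p \<in> Hahn" for p unfolding g_def using g_in[OF aG] .
  have gr: "g p = mmul (g q) (mdiv (theta d q) (theta d p))" for p q unfolding g_def by (rule g_rel)
  have U: "LF (g p) < p" if ne: "g p \<noteq> mone" for p
  proof (rule ccontr)
    assume "\<not> LF (g p) < p"
    moreover have "LF (g p) \<noteq> p" using H ne unfolding g_def by blast
    ultimately have lt: "p < LF (g p)" by simp
    define l where "l = LF (g p)"
    have "g p l \<noteq> 0" unfolding l_def using LF_ex(1)[OF gH ne] .
    moreover have "mdiv (theta d l) (theta d p) l = 0" using F2[OF lt[folded l_def]] by blast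
    ultimately have gl: "g l l \<noteq> 0" using gr[of p l] by (simp add: mmul_def)
    hence gln: "g l \<noteq> mone" by (auto simp: mone_def)
    have "LF (g l) \<noteq> l" using H gln unfolding g_def by blast
    moreover have "l \<le> LF (g l)" using LF_ex(2)[OF gH gln] gl by blast
    ultimately have lk: "l < LF (g l)" by simp
    define k where "k = LF (g l)"
    have "g l k \<noteq> 0" unfolding k_def using LF_ex(1)[OF gH gln] .
    moreover have "mdiv (theta d l) (theta d p) k = 0" using F2[OF lt[folded l_def]] lk[folded k_def] 
      by (metis less_asym)
    ultimately have "g p k \<noteq> 0" using gr[of p l] by (simp add: mmul_def)
    hence "k \<le> l" using LF_ex(2)[OF gH ne] unfolding l_def by blast
    thus False using lk[folded k_def] by simp
  qed
  have L: "\<not> mgt1 (g p)" for p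
  proof
    assume m: "mgt1 (g p)"
    hence ne: "g p \<noteq> mone" and pos: "g p (LF (g p)) > 0" unfolding mgt1_def LE_def by auto
    define c where "c = LF (g p)"
    have cp: "c < p" unfolding c_def using U[OF ne] .
    define \<delta> where "\<delta> = mdiv (theta d p) (theta d c)"
    have dm: "mgt1 \<delta>" unfolding \<delta>_def using theta_gt[OF cp] .
    hence dne: "\<delta> \<noteq> mone" and dpos: "\<delta> (LF \<delta>) > 0" unfolding mgt1_def LE_def by auto
    have dH: "\<delta> \<in> Hahn" unfolding \<delta>_def using vg_Hahn[OF vg vg_mdiv[OF vg theta_in theta_in]] .
    note LD = LF_ex[OF dH dne]
    note LP = LF_ex[OF gH ne, folded c_def]
    have gc: "g c = mmul (g p) \<delta>" unfolding \<delta>_def by (rule gr)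
    define z where "z = max c (LF \<delta>)"
    have "g p z \<ge> 0" 
    proof (cases "z = c")
      case True thus ?thesis using pos unfolding c_def by simp
    next
      case False hence "z > c" unfolding z_def by (simp add: max_def split: if_splits)
      thus ?thesis using LP(2) by (metis leD order.refl)
    qed
    moreover have "\<delta> z \<ge> 0"
    proof (cases "z = LF \<delta>")
      case True thus ?thesis using dpos by simp
    next
      case False hence "z > LF \<delta>" unfolding z_def by (simp add: max_def split: if_splits)
      thus ?thesis using LD(2) by (metis leD order.refl)
    qed
    moreover have "g p z > 0 \<or> \<delta> z > 0" unfolding z_def using pos dpos c_def
      by (simp add: max_def)
    ultimately have gz: "g c z \<noteq> 0" unfolding gc by (auto simp: mmul_def)
    hence gcn: "g c \<noteq> mone" by (auto simp: mone_def)
    have "z \<le> LF (g c)" using LF_ex(2)[OF gH gcn] gz by blast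
    moreover have "LF (g c) < c" using U[OF gcn] .
    ultimately show False unfolding z_def by (simp add: leD)
  qed
  have lb: "mle \<alpha> (theta d p)" for p
  proof (cases "\<alpha> = theta d p")
    case False
    hence ne: "g p \<noteq> mone" unfolding g_def using mdiv_mone by metis
    have "mgt1 (minv (g p))" using mgt1_total[OF gH ne] L by blast
    moreover have "minv (g p) = mdiv (theta d p) \<alpha>" unfolding g_def by (auto simp: minv_def mdiv_def)
    ultimately show ?thesis unfolding mle_def by simp
  qed (simp add: mle_refl)
  have gr2: "mle s \<alpha>" if sG: "s \<in> \<Gamma>" and sl: "\<forall>p. mle s (theta d p)" for s
  proof (rule ccontr)
    assume nle: "\<not> mle s \<alpha>"
    hence "mle \<alpha> s" "\<alpha> \<noteq> s" using mle_total[OF vg sG aG] mle_refl by auto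
    hence bm: "mgt1 (mdiv s \<alpha>)" unfolding mle_def by simp
    define \<beta> where "\<beta> = mdiv s \<alpha>"
    have bH: "\<beta> \<in> Hahn" unfolding \<beta>_def using vg_Hahn[OF vg vg_mdiv[OF vg sG aG]] .
    have bne: "\<beta> \<noteq> mone" and bpos: "\<beta> (LF \<beta>) > 0" using bm unfolding \<beta>_def mgt1_def LE_def by auto
    define x where "x = LF \<beta>"
    note LB = LF_ex[OF bH bne, folded x_def]
    have g0: "g x r = 0" if "x \<le> r" for r
    proof (cases "g x = mone")
      case True thus ?thesis by (simp add: mone_def)
    next
      case False
      have "LF (g x) < x" using U[OF False] .
      thus ?thesis using LF_ex(2)[OF gH False, of r] that by (meson leD order.strict_trans1)
    qed
    have e: "mdiv s (theta d x) = mmul \<beta> (g x)" unfolding \<beta>_def g_def by (auto simp: mdiv_def mmul_def)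
    have "mgt1 (mdiv s (theta d x))" unfolding e
    proof (rule mgt1_I[where z=x])
      show "mmul \<beta> (g x) x > 0" using bpos g0[of x] unfolding x_def by (simp add: mmul_def)
    next
      fix r assume "mmul \<beta> (g x) r \<noteq> 0"
      hence "\<beta> r \<noteq> 0 \<or> g x r \<noteq> 0" by (auto simp: mmul_def)
      thus "r \<le> x" using LB(2) g0 by (meson linorder_le_cases)
    qed
    thus False using mle_not_gt sl by blast
  qed
  have "is_theta_hat \<Gamma> d \<alpha>" unfolding is_theta_hat_def using aG lb gr2 by blast
  thus False using nt by simp
qed

lemma psi_prop:
  assumes aG: "\<alpha> \<in> \<Gamma>" and nt: "\<not> is_theta_hat \<Gamma> d \<alpha>"
  shows "mdiv \<alpha> (theta d (psi d \<alpha>)) \<noteq> mone \<and> LF (mdiv \<alpha> (theta d (psi d \<alpha>))) = psi d \<alpha>"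
proof -
  have "\<exists>!p. mdiv \<alpha> (theta d p) \<noteq> mone \<and> LF (mdiv \<alpha> (theta d p)) = p"
    using psi_exists[OF aG nt] psi_uniq[OF aG] by blast
  thus ?thesis unfolding psi_def by (rule theI')
qed


lemma sscale_mono_KK: "\<mu> \<in> \<Gamma> \<Longrightarrow> c \<noteq> 0 \<Longrightarrow> sscale c (smono \<mu>) \<in> KK \<Gamma>"
proof -
  assume "\<mu> \<in> \<Gamma>" "c \<noteq> 0"
  hence "ssupp (sscale c (smono \<mu>)) = ssupp (smono \<mu>)" by (auto simp: ssupp_def sscale_def smono_def)
  thus ?thesis using smono_KK[OF \<open>\<mu> \<in> \<Gamma>\<close>] unfolding KK_def by simp
qed

lemma d_scale: assumes "\<mu> \<in> \<Gamma>" "c \<noteq> 0" shows "d (sscale c (smono \<mu>)) = sscale c (d (smono \<mu>))"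
proof
  fix \<nu>
  have s: "ssupp (sscale c (smono \<mu>)) = {\<mu>}" using assms(2) by (auto simp: ssupp_def sscale_def smono_def)
  have "d (sscale c (smono \<mu>)) \<nu> = fam_sum {\<mu>} (\<lambda>\<alpha>. sscale (sscale c (smono \<mu>) \<alpha>) (d (smono \<alpha>))) \<nu>"
    using d_lin[OF sscale_mono_KK[OF assms]] s by simp
  also have "\<dots> = sscale c (d (smono \<mu>)) \<nu>"
  proof (cases "d (smono \<mu>) \<nu> = 0")
    case True
    hence "{i \<in> {\<mu>}. sscale (sscale c (smono \<mu>) i) (d (smono i)) \<nu> \<noteq> 0} = {}"
      by (auto simp: sscale_def)
    thus ?thesis using True unfolding fam_sum_def by (simp add: sscale_def)
  next
    case False
    hence "{i \<in> {\<mu>}. sscale (sscale c (smono \<mu>) i) (d (smono i)) \<nu> \<noteq> 0} = {\<mu>}"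
      using assms(2) by (auto simp: sscale_def smono_def)
    thus ?thesis unfolding fam_sum_def by (simp add: sscale_def smono_def)
  qed
  finally show "d (sscale c (smono \<mu>)) \<nu> = sscale c (d (smono \<mu>)) \<nu>" .
qed

lemma LT_main:
  assumes mu: "\<mu> \<in> \<Gamma>" "\<mu> \<noteq> mone" and k: "k \<noteq> 0"
  shows "LT (d (sscale k (smono \<mu>))) =
     (\<lambda>\<nu>. if \<nu> = mmul \<mu> (theta d (LF \<mu>)) then k * (LE \<mu> * LC (d (smono (fund (LF \<mu>))))) else 0)"
proof -
  define X where "X = d (smono \<mu>)"
  define t where "t = mmul \<mu> (theta d (LF \<mu>))"
  have XK: "X \<in> KK \<Gamma>" unfolding X_def using d_KK[OF smono_KK[OF mu(1)]] .
  have Xn: "X \<noteq> szero" unfolding X_def using M(3)[OF mu] .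
  have XL: "LM X = t" unfolding X_def t_def using M(1)[OF mu] .
  have Xv: "X t = LE \<mu> * LC (d (smono (fund (LF \<mu>))))" unfolding X_def t_def using M(2)[OF mu] .
  have D: "d (sscale k (smono \<mu>)) = sscale k X" unfolding X_def using d_scale[OF mu(1) k] .
  have LMs: "LM (sscale k X) = t"
  proof (rule LM_eqI)
    show "sscale k X t \<noteq> 0" using k LM_ex(1)[OF XK Xn] XL by (simp add: sscale_def)
    fix \<nu> assume "sscale k X \<nu> \<noteq> 0"
    hence "X \<nu> \<noteq> 0" by (simp add: sscale_def)
    thus "mle \<nu> t" using LM_ex(2)[OF XK Xn] XL by metis
  qed
  have e: "sscale k X t = k * X t" unfolding sscale_def by simp
  have "LT (sscale k X) = (\<lambda>\<nu>. if \<nu> = t then k * X t else 0)"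
    unfolding LT_def LC_def LMs e ..
  thus ?thesis unfolding D by (simp only: t_def[symmetric] Xv)
qed

lemma main:
  assumes aK: "a \<in> KK \<Gamma>" and an: "a \<noteq> szero"
    and nt: "\<not> (\<exists>t. is_theta_hat \<Gamma> d t \<and> LM a = t)"
  shows "LT (d (ai_mon d (LM a))) = smono (LM a) \<and>
         LT (d (sscale (LC a) (ai_mon d (LM a)))) = LT a"
proof -
  define \<alpha> where "\<alpha> = LM a"
  have aG: "\<alpha> \<in> \<Gamma>" unfolding \<alpha>_def using LM_ex(3)[OF aK an] .
  have nt': "\<not> is_theta_hat \<Gamma> d \<alpha>" using nt unfolding \<alpha>_def by blast
  define \<psi> where "\<psi> = psi d \<alpha>"
  define \<beta> where "\<beta> = mdiv \<alpha> (theta d \<psi>)"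
  have P: "\<beta> \<noteq> mone" "LF \<beta> = \<psi>" using psi_prop[OF aG nt'] unfolding \<beta>_def \<psi>_def by auto
  have bG: "\<beta> \<in> \<Gamma>" unfolding \<beta>_def using vg_mdiv[OF vg aG theta_in] .
  define L where "L = LC (d (smono (fund \<psi>)))"
  have Ln: "L \<noteq> 0" unfolding L_def using LC_l .
  have LEn: "LE \<beta> \<noteq> 0" unfolding LE_def using LF_ex(1)[OF vg_Hahn[OF vg bG] P(1)] .
  define c where "c = 1 / (LE \<beta> * L)"
  have cn: "c \<noteq> 0" unfolding c_def using Ln LEn by simp
  have c1: "c * (LE \<beta> * L) = 1" unfolding c_def using Ln LEn by simp
  have ai: "ai_mon d \<alpha> = sscale c (smono \<beta>)"
    unfolding ai_mon_def Let_def c_def L_def \<beta>_def \<psi>_def theta_def by simp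
  have t': "mmul \<beta> (theta d \<psi>) = \<alpha>" unfolding \<beta>_def by (auto simp: mmul_def mdiv_def)
  hence t: "mmul \<beta> (theta d (LF \<beta>)) = \<alpha>" unfolding P(2) .
  have LCa: "LC a \<noteq> 0" unfolding LC_def using LM_ex(1)[OF aK an] .
  have sc: "sscale (LC a) (sscale c (smono \<beta>)) = sscale (LC a * c) (smono \<beta>)"
    by (auto simp: sscale_def)
  have 1: "LT (d (ai_mon d \<alpha>)) = smono \<alpha>"
    unfolding ai LT_main[OF bG P(1) cn] t P(2) t' L_def[symmetric] c1 by (auto simp: smono_def)
  have 2: "LT (d (sscale (LC a) (ai_mon d \<alpha>))) = LT a"
  proof -
    have "LC a * c \<noteq> 0" using LCa cn by simp
    have "LT (d (sscale (LC a) (ai_mon d \<alpha>))) = 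
        (\<lambda>\<nu>. if \<nu> = \<alpha> then LC a * c * (LE \<beta> * L) else 0)"
      unfolding ai sc LT_main[OF bG P(1) \<open>LC a * c \<noteq> 0\<close>] t P(2) t' L_def[symmetric] ..
    also have "\<dots> = LT a" unfolding LT_def \<alpha>_def using c1 by (auto simp: mult.assoc)
    finally show ?thesis .
  qed
  show ?thesis using 1 2 unfolding \<alpha>_def by simp
qed

end

theorem mainTheorem5:
  fixes \<Gamma> :: "'p::linorder mon set" and d :: "'p ser \<Rightarrow> 'p ser" and a :: "'p ser"
  assumes "value_group \<Gamma>"
    and "hardy_series_derivation \<Gamma> d"
    and "a \<in> KK \<Gamma>" and "a \<noteq> szero"
    and "\<not> (\<exists>t. is_theta_hat \<Gamma> d t \<and> LM a = t)"
  shows "LT (d (ai_mon d (LM a))) = smono (LM a) \<and>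
         LT (d (sscale (LC a) (ai_mon d (LM a)))) = LT a"
proof -
  interpret HS \<Gamma> d using assms(1,2) by unfold_locales
  show ?thesis using main[OF assms(3,4,5)] .
qed

end
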